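(* Let $I$ be a resident-minimal and hospital-complete instance and suppose there is a prescription $(P,X)$ for $I$. Then there is a simple extension $J$ of $I$ such that $\mathrm{prop}(J)\setminus\mathrm{prop}(I)\subseteq P$, $\mathrm{rej}(J)\setminus\mathrm{rej}(I)\subseteq X$, and $\mathrm{tgs}(P,X)\subseteq\mathrm{rej}(J)$.
   Context: An instance $I$ consists of finite disjoint sets $R$ (residents) and $H$ (hospitals), a positive integer quota $q_h$ for each $h\in H$, for each $r\in R$ a preference list of $r$ (a sequence of distinct members of $H$, not necessarily all), and for each $h\in H$ a preference list of $h$ (a sequence of distinct members of $R$). A list is complete if it contains every member of the opposite side; an instance is hospital-complete if every hospital's list is complete. A match is a pair $(r,h)\in R\times H$. For a set $M$ of matches, $\mathrm{res}_h M=\{r:(r,h)\in M\}$, $\mathrm{res}\,M=\{r:(r,h)\in M\text{ for some }h\}$. $J$ is an extension of $I$ (same $R,H$, quotas) if every list of $J$ has the corresponding list of $I$ as a prefix. An event is $(r,h)^+$ (proposal) or $(r,h)^-$ (rejection). For an event sequence $\sigma$, $\mathrm{prop}(\sigma)$, $\mathrm{rej}(\sigma)$ are the sets of matches proposed/rejected in $\sigma$ and $\mathrm{tent}(\sigma)=\mathrm{prop}(\sigma)\setminus\mathrm{rej}(\sigma)$. A match $(r,h)\in M$ is ousted from $M$ in $I$ if the list of $h$ in $I$ contains at least $q_h$ residents of $\mathrm{res}_h M$ and either $r$ is not on it or $r$ is preceded on it by at least $q_h$ residents of $\mathrm{res}_h M$. $I$-feasible sequences: the empty sequence is $I$-feasible;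 if $\sigma$ is $I$-feasible then $\sigma+(r,h)^+$ is $I$-feasible if $r\notin\mathrm{res}\,\mathrm{tent}(\sigma)$, $(r,h)\notin\mathrm{prop}(\sigma)$, $h$ is on the list of $r$ in $I$ and $(r,h')\in\mathrm{rej}(\sigma)$ for every $h'$ preceding $h$ on it; and $\sigma+(r,h)^-$ is $I$-feasible if $(r,h)$ is ousted from $\mathrm{prop}(\sigma)$ in $I$ and $(r,h)\notin\mathrm{rej}(\sigma)$. All maximal $I$-feasible sequences contain the same events; $\mathrm{prop}(I),\mathrm{rej}(I),\mathrm{tent}(I)$ denote $\mathrm{prop}(\sigma),\mathrm{rej}(\sigma),\mathrm{tent}(\sigma)$ for any maximal $I$-feasible $\sigma$. $I$ is resident-minimal if $\mathrm{prop}(I)$ equals the set of matches $(r,h)$ with $h$ on the list of $r$ in $I$. An extension $J$ of $I$ is simple if $(\mathrm{prop}(J)\setminus\mathrm{prop}(I))\cap(\mathrm{rej}(J)\setminus\mathrm{rej}(I))=\emptyset$. For a resident-minimal and hospital-complete instance $I$, a prescription for $I$ is a pair $(P,X)$ of sets of matches such that: (P1) $P\cap\mathrm{prop}(I)=\emptyset$; (P2) for each $r\in R$ there is at most one $h$ with $(r,h)\in P$; (P3) $X\subseteq\mathrm{tent}(I)$; (P4) $\mathrm{res}\,P\cap\mathrm{res}\,\mathrm{tent}(I)\subseteq\mathrm{res}\,X$; (P5) for each $h\in H$, $|\mathrm{res}_h(P\cup(\mathrm{tent}(I)\setminus X))|\le q_h$, with equality if $\mathrm{res}_h X\neq\emptyset$;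 (P6) for each $h\in H$, every member of $\mathrm{res}_h(P\cup(\mathrm{tent}(I)\setminus X))$ precedes all members of $\mathrm{res}_h X$ in the list of $h$ in $I$. Its target set is $\mathrm{tgs}(P,X)=\{(r,h)\in X: r\notin\mathrm{res}\,P\}$. *)

theory Defs
  imports Main
begin

text \<open>Residents and hospitals live in two separate types (so R and H are automatically disjoint).\<close>

record ('r, 'h) inst =
  Res   :: "'r set"
  Hos   :: "'h set"
  quota :: "'h \<Rightarrow> nat"
  rpref :: "'r \<Rightarrow> 'h list"
  hpref :: "'h \<Rightarrow> 'r list"

definition valid_instance :: "('r, 'h) inst \<Rightarrow> bool" where
  "valid_instance I \<longleftrightarrow>
     finite (Res I) \<and> finite (Hos I) \<and>
     (\<forall>h\<in>Hos I. quota I h > 0) \<and>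
     (\<forall>r\<in>Res I. distinct (rpref I r) \<and> set (rpref I r) \<subseteq> Hos I) \<and>
     (\<forall>h\<in>Hos I. distinct (hpref I h) \<and> set (hpref I h) \<subseteq> Res I) \<and>
     (\<forall>r. r \<notin> Res I \<longrightarrow> rpref I r = []) \<and>
     (\<forall>h. h \<notin> Hos I \<longrightarrow> hpref I h = [])"

definition hospital_complete :: "('r, 'h) inst \<Rightarrow> bool" where
  "hospital_complete I \<longleftrightarrow> (\<forall>h\<in>Hos I. set (hpref I h) = Res I)"

definition is_extension :: "('r, 'h) inst \<Rightarrow> ('r, 'h) inst \<Rightarrow> bool" where
  "is_extension I J \<longleftrightarrow> valid_instance J \<and>
     Res J = Res I \<and> Hos J = Hos I \<and> (\<forall>h\<in>Hos I. quota J h = quota I h) \<and>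
     (\<forall>r\<in>Res I. \<exists>ys. rpref J r = rpref I r @ ys) \<and>
     (\<forall>h\<in>Hos I. \<exists>ys. hpref J h = hpref I h @ ys)"

definition res_h :: "'h \<Rightarrow> ('r \<times> 'h) set \<Rightarrow> 'r set" where
  "res_h h M = {r. (r, h) \<in> M}"

definition res :: "('r \<times> 'h) set \<Rightarrow> 'r set" where
  "res M = {r. \<exists>h. (r, h) \<in> M}"

definition precedes :: "'a list \<Rightarrow> 'a \<Rightarrow> 'a \<Rightarrow> bool" where
  "precedes L a b \<longleftrightarrow> (\<exists>i j. i < j \<and> j < length L \<and> L ! i = a \<and> L ! j = b)"

datatype ('r, 'h) event = Propose 'r 'h | Reject 'r 'h

definition props :: "('r, 'h) event list \<Rightarrow> ('r \<times> 'h) set" where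
  "props \<sigma> = {(r, h). Propose r h \<in> set \<sigma>}"

definition rejs :: "('r, 'h) event list \<Rightarrow> ('r \<times> 'h) set" where
  "rejs \<sigma> = {(r, h). Reject r h \<in> set \<sigma>}"

definition tents :: "('r, 'h) event list \<Rightarrow> ('r \<times> 'h) set" where
  "tents \<sigma> = props \<sigma> - rejs \<sigma>"

definition ousted :: "('r, 'h) inst \<Rightarrow> ('r \<times> 'h) set \<Rightarrow> 'r \<Rightarrow> 'h \<Rightarrow> bool" where
  "ousted I M r h \<longleftrightarrow>
     (r, h) \<in> M \<and>
     card (set (hpref I h) \<inter> res_h h M) \<ge> quota I h \<and>
     (r \<notin> set (hpref I h) \<or>
      card {x \<in> res_h h M. precedes (hpref I h) x r} \<ge> quota I h)"

inductive feasible :: "('r, 'h) inst \<Rightarrow> ('r, 'h) event list \<Rightarrow> bool" for I where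
  feasible_Nil: "feasible I []"
| feasible_Prop: "\<lbrakk> feasible I \<sigma>; r \<notin> res (tents \<sigma>); (r, h) \<notin> props \<sigma>;
                    h \<in> set (rpref I r);
                    \<forall>h'. precedes (rpref I r) h' h \<longrightarrow> (r, h') \<in> rejs \<sigma> \<rbrakk>
                  \<Longrightarrow> feasible I (\<sigma> @ [Propose r h])"
| feasible_Rej: "\<lbrakk> feasible I \<sigma>; ousted I (props \<sigma>) r h; (r, h) \<notin> rejs \<sigma> \<rbrakk>
                  \<Longrightarrow> feasible I (\<sigma> @ [Reject r h])"

definition maximal_feasible :: "('r, 'h) inst \<Rightarrow> ('r, 'h) event list \<Rightarrow> bool" where
  "maximal_feasible I \<sigma> \<longleftrightarrow> feasible I \<sigma> \<and> (\<forall>e. \<not> feasible I (\<sigma> @ [e]))"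

text \<open>All maximal I-feasible sequences contain the same events (a fact from the paper);
  prop(I), rej(I), tent(I) are taken from an arbitrary maximal one.\<close>
definition some_max :: "('r, 'h) inst \<Rightarrow> ('r, 'h) event list" where
  "some_max I = (SOME \<sigma>. maximal_feasible I \<sigma>)"

definition propI :: "('r, 'h) inst \<Rightarrow> ('r \<times> 'h) set" where
  "propI I = props (some_max I)"

definition rejI :: "('r, 'h) inst \<Rightarrow> ('r \<times> 'h) set" where
  "rejI I = rejs (some_max I)"

definition tentI :: "('r, 'h) inst \<Rightarrow> ('r \<times> 'h) set" where
  "tentI I = tents (some_max I)"

definition resident_minimal :: "('r, 'h) inst \<Rightarrow> bool" where
  "resident_minimal I \<longleftrightarrow> propI I = {(r, h). h \<in> set (rpref I r)}"

definition simple_extension :: "('r, 'h) inst \<Rightarrow> ('r, 'h) inst \<Rightarrow> bool" where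
  "simple_extension I J \<longleftrightarrow> is_extension I J \<and>
     (propI J - propI I) \<inter> (rejI J - rejI I) = {}"

definition prescription :: "('r, 'h) inst \<Rightarrow> ('r \<times> 'h) set \<Rightarrow> ('r \<times> 'h) set \<Rightarrow> bool" where
  "prescription I P X \<longleftrightarrow>
     P \<subseteq> Res I \<times> Hos I \<and> X \<subseteq> Res I \<times> Hos I \<and>
     P \<inter> propI I = {} \<and>
     (\<forall>r h h'. (r, h) \<in> P \<and> (r, h') \<in> P \<longrightarrow> h = h') \<and>
     X \<subseteq> tentI I \<and>
     res P \<inter> res (tentI I) \<subseteq> res X \<and>
     (\<forall>h\<in>Hos I. card (res_h h (P \<union> (tentI I - X))) \<le> quota I h \<and>
                 (res_h h X \<noteq> {} \<longrightarrow> card (res_h h (P \<union> (tentI I - X))) = quota I h)) \<and>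
     (\<forall>h\<in>Hos I. \<forall>a\<in>res_h h (P \<union> (tentI I - X)). \<forall>b\<in>res_h h X.
                 precedes (hpref I h) a b)"

definition tgs :: "('r \<times> 'h) set \<Rightarrow> ('r \<times> 'h) set \<Rightarrow> ('r \<times> 'h) set" where
  "tgs P X = {(r, h) \<in> X. r \<notin> res P}"

end

theory Submission
  imports Defs
begin


lemma prec_mem: "precedes L a b \<Longrightarrow> a \<in> set L \<and> b \<in> set L"
  unfolding precedes_def by auto

lemma prec_irrefl: "distinct L \<Longrightarrow> \<not> precedes L a a"
  unfolding precedes_def using nth_eq_iff_index_eq by fastforce

lemma prec_trans: "distinct L \<Longrightarrow> precedes L a b \<Longrightarrow> precedes L b c \<Longrightarrow> precedes L a c"
  unfolding precedes_def
proof (elim exE conjE)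
  fix i j i' j'
  assume d: "distinct L" and 1: "i < j" "j < length L" "L ! i = a" "L ! j = b"
    and 2: "i' < j'" "j' < length L" "L ! i' = b" "L ! j' = c"
  have "j = i'" using nth_eq_iff_index_eq[OF d, of j i'] 1 2 by auto
  thus "\<exists>i j. i < j \<and> j < length L \<and> L ! i = a \<and> L ! j = c" using 1 2 by (intro exI[of _ i] exI[of _ j']) auto
qed

lemma prec_asym: "distinct L \<Longrightarrow> precedes L a b \<Longrightarrow> \<not> precedes L b a"
  using prec_trans prec_irrefl by metis

lemma prec_total: "a \<in> set L \<Longrightarrow> b \<in> set L \<Longrightarrow> a \<noteq> b \<Longrightarrow> precedes L a b \<or> precedes L b a"
  unfolding precedes_def in_set_conv_nth
  by (metis linorder_neqE_nat)

lemma prec_append_mono: "precedes xs a b \<Longrightarrow> precedes (xs @ ys) a b"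
  unfolding precedes_def
proof (elim exE conjE)
  fix i j assume "i < j" "j < length xs" "xs ! i = a" "xs ! j = b"
  thus "\<exists>i j. i < j \<and> j < length (xs @ ys) \<and> (xs @ ys) ! i = a \<and> (xs @ ys) ! j = b"
    by (intro exI[of _ i] exI[of _ j]) (auto simp: nth_append)
qed

lemma prec_append: "distinct (xs @ ys) \<Longrightarrow> b \<in> set xs \<Longrightarrow> precedes (xs @ ys) a b \<Longrightarrow> precedes xs a b"
proof -
  assume d: "distinct (xs @ ys)" and b: "b \<in> set xs" and p: "precedes (xs @ ys) a b"
  then obtain i j where ij: "i < j" "j < length (xs@ys)" "(xs@ys) ! i = a" "(xs@ys) ! j = b"
    unfolding precedes_def by blast
  obtain k where k: "k < length xs" "xs ! k = b" using b by (auto simp: in_set_conv_nth)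
  have "(xs@ys) ! k = b" using k by (simp add: nth_append)
  hence "j = k" using nth_eq_iff_index_eq[OF d, of j k] ij k by auto
  moreover have "(xs@ys) ! i = xs ! i" using ij k \<open>j = k\<close> by (simp add: nth_append)
  ultimately show ?thesis using ij k unfolding precedes_def by (intro exI[of _ i] exI[of _ j]) auto
qed

lemma props_Prop[simp]: "props (\<sigma> @ [Propose r h]) = insert (r,h) (props \<sigma>)"
  and props_Rej[simp]: "props (\<sigma> @ [Reject r h]) = props \<sigma>"
  and rejs_Prop[simp]: "rejs (\<sigma> @ [Propose r h]) = rejs \<sigma>"
  and rejs_Rej[simp]: "rejs (\<sigma> @ [Reject r h]) = insert (r,h) (rejs \<sigma>)"
  and props_Nil[simp]: "props [] = {}" and rejs_Nil[simp]: "rejs [] = {}"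
  unfolding props_def rejs_def by auto

lemma feas_rejs_props: "feasible K \<sigma> \<Longrightarrow> rejs \<sigma> \<subseteq> props \<sigma>"
  by (induction rule: feasible.induct) (auto simp: ousted_def)

lemma feas_tent_fun: "feasible K \<sigma> \<Longrightarrow> (r,h) \<in> tents \<sigma> \<Longrightarrow> (r,h') \<in> tents \<sigma> \<Longrightarrow> h = h'"
proof (induction arbitrary: r h h' rule: feasible.induct)
  case feasible_Nil thus ?case by (simp add: tents_def)
next
  case (feasible_Prop \<sigma> r0 h0)
  thus ?case by (auto simp: tents_def res_def)
next
  case (feasible_Rej \<sigma> r0 h0)
  thus ?case by (auto simp: tents_def)
qed

lemma feas_props_pref: "feasible K \<sigma> \<Longrightarrow> (r,h) \<in> props \<sigma> \<Longrightarrow> h \<in> set (rpref K r)"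
  by (induction arbitrary: r h rule: feasible.induct) auto

lemma feas_props_RH: "valid_instance K \<Longrightarrow> feasible K \<sigma> \<Longrightarrow> props \<sigma> \<subseteq> Res K \<times> Hos K"
  using feas_props_pref unfolding valid_instance_def by fastforce

lemma feas_order: "feasible K \<sigma> \<Longrightarrow> (r,h) \<in> props \<sigma> \<Longrightarrow> precedes (rpref K r) h' h \<Longrightarrow> (r,h') \<in> rejs \<sigma>"
  by (induction arbitrary: r h h' rule: feasible.induct) auto

lemma feas_distinct: "feasible K \<sigma> \<Longrightarrow> distinct \<sigma>"
  by (induction rule: feasible.induct) (auto simp: props_def rejs_def)

lemma feas_set: "feasible K \<sigma> \<Longrightarrow> set \<sigma> \<subseteq> (\<lambda>(r,h). Propose r h) ` {(r,h). h \<in> set (rpref K r)}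
   \<union> (\<lambda>(r,h). Reject r h) ` {(r,h). h \<in> set (rpref K r)}"
proof (induction rule: feasible.induct)
  case (feasible_Rej \<sigma> r h)
  then have "h \<in> set (rpref K r)" using feas_props_pref[OF feasible_Rej(1)] by (auto simp: ousted_def)
  thus ?case using feasible_Rej by auto
qed auto

lemma exists_max: assumes v: "valid_instance K" shows "\<exists>\<sigma>. maximal_feasible K \<sigma>"
proof -
  let ?A = "{(r,h). h \<in> set (rpref K r)}"
  have "?A \<subseteq> Res K \<times> Hos K" using v unfolding valid_instance_def by fastforce
  hence fA: "finite ?A" using v unfolding valid_instance_def by (meson finite_SigmaI finite_subset)
  let ?E = "(\<lambda>(r,h). Propose r h) ` ?A \<union> (\<lambda>(r,h). Reject r h) ` ?A"
  have fE: "finite ?E" using fA by simp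
  have bd: "\<forall>n. (\<exists>\<sigma>. feasible K \<sigma> \<and> length \<sigma> = n) \<longrightarrow> n \<le> card ?E"
  proof (intro allI impI, elim exE conjE)
    fix n \<sigma> assume f: "feasible K \<sigma>" and l: "length \<sigma> = n"
    have "length \<sigma> = card (set \<sigma>)" using feas_distinct[OF f] by (simp add: distinct_card)
    also have "\<dots> \<le> card ?E" using card_mono[OF fE feas_set[OF f]] .
    finally show "n \<le> card ?E" using l by simp
  qed
  obtain n where n: "\<exists>\<sigma>. feasible K \<sigma> \<and> length \<sigma> = n"
    and mx: "\<forall>m. (\<exists>\<sigma>. feasible K \<sigma> \<and> length \<sigma> = m) \<longrightarrow> m \<le> n"
    using Nat.ex_has_greatest_nat[of "\<lambda>n. \<exists>\<sigma>. feasible K \<sigma> \<and> length \<sigma> = n" 0, OF _ bd]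
    using feasible_Nil by fastforce
  then obtain \<sigma> where "feasible K \<sigma>" "length \<sigma> = n" by blast
  moreover have "\<forall>e. \<not> feasible K (\<sigma> @ [e])"
    using mx \<open>length \<sigma> = n\<close> by (metis Suc_n_not_le_n length_append_singleton)
  ultimately show ?thesis unfolding maximal_feasible_def by blast
qed

lemma some_max: "valid_instance K \<Longrightarrow> maximal_feasible K (some_max K)"
  unfolding some_max_def using exists_max someI_ex by metis



definition above :: "('r,'h) inst \<Rightarrow> ('r,'h) event list \<Rightarrow> 'h \<Rightarrow> 'r \<Rightarrow> 'r set" where
  "above K \<sigma> h s = {t \<in> res_h h (tents \<sigma>). precedes (hpref K h) t s}"

lemma above_fin: "finite (above K \<sigma> h s)"
proof -
  have "above K \<sigma> h s \<subseteq> set (hpref K h)" unfolding above_def using prec_mem by fast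
  thus ?thesis using finite_subset by blast
qed

lemma tents_Prop: "tents \<sigma> \<subseteq> tents (\<sigma> @ [Propose r h])"
  unfolding tents_def by auto

lemma tents_Rej: "tents (\<sigma> @ [Reject r h]) = tents \<sigma> - {(r,h)}"
  unfolding tents_def by auto

lemma hpref_distinct: "valid_instance K \<Longrightarrow> distinct (hpref K h)"
  unfolding valid_instance_def by (cases "h \<in> Hos K") auto

lemma key_ousted:
  assumes v: "valid_instance K" and hc: "hospital_complete K" and f: "feasible K \<sigma>"
    and IH: "\<And>s h. (s,h) \<in> rejs \<sigma> \<Longrightarrow> quota K h \<le> card (above K \<sigma> h s)"
    and o: "ousted K (props \<sigma>) r h"
  shows "quota K h \<le> card (above K \<sigma> h r)"
proof -
  have rh: "(r,h) \<in> props \<sigma>" using o unfolding ousted_def by simp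
  hence "r \<in> Res K" "h \<in> Hos K" using feas_props_RH[OF v f] by auto
  hence "r \<in> set (hpref K h)" using hc unfolding hospital_complete_def by auto
  hence B: "quota K h \<le> card {x \<in> res_h h (props \<sigma>). precedes (hpref K h) x r}"
    using o unfolding ousted_def by auto
  have d: "distinct (hpref K h)" using hpref_distinct[OF v] .
  show ?thesis
  proof (cases "\<exists>x. x \<in> res_h h (props \<sigma>) \<and> precedes (hpref K h) x r \<and> (x,h) \<in> rejs \<sigma>")
    case True
    then obtain x where x: "precedes (hpref K h) x r" "(x,h) \<in> rejs \<sigma>" by blast
    have "above K \<sigma> h x \<subseteq> above K \<sigma> h r" unfolding above_def using prec_trans[OF d] x(1) by blast
    thus ?thesis using IH[OF x(2)] card_mono[OF above_fin] by (meson le_trans)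
  next
    case False
    hence "{x \<in> res_h h (props \<sigma>). precedes (hpref K h) x r} \<subseteq> above K \<sigma> h r"
      unfolding above_def res_h_def tents_def by auto
    thus ?thesis using B card_mono[OF above_fin] by (meson le_trans)
  qed
qed

lemma rej_inv:
  assumes v: "valid_instance K" and hc: "hospital_complete K"
  shows "feasible K \<sigma> \<Longrightarrow> (s,h) \<in> rejs \<sigma> \<Longrightarrow> quota K h \<le> card (above K \<sigma> h s)"
proof (induction arbitrary: s h rule: feasible.induct)
  case feasible_Nil thus ?case by simp
next
  case (feasible_Prop \<sigma> r0 h0)
  have "above K \<sigma> h s \<subseteq> above K (\<sigma> @ [Propose r0 h0]) h s"
    unfolding above_def res_h_def using tents_Prop[of \<sigma> r0 h0] by auto
  moreover have "(s,h) \<in> rejs \<sigma>" using feasible_Prop.prems by simp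
  ultimately show ?case using feasible_Prop.IH[of s h] card_mono[OF above_fin, of "above K \<sigma> h s" K "\<sigma> @ [Propose r0 h0]" h s] by linarith
next
  case (feasible_Rej \<sigma> r0 h0)
  have d: "distinct (hpref K h)" using hpref_distinct[OF v] .
  have K0: "quota K h0 \<le> card (above K \<sigma> h0 r0)"
    using key_ousted[OF v hc feasible_Rej.hyps(1) feasible_Rej.IH feasible_Rej.hyps(2)] .
  have ab: "above K (\<sigma> @ [Reject r0 h0]) h s = above K \<sigma> h s - (if h = h0 then {r0} else {})"
    unfolding above_def res_h_def tents_Rej by auto
  show ?case
  proof (cases "(s,h) = (r0,h0)")
    case True
    hence "above K (\<sigma> @ [Reject r0 h0]) h s = above K \<sigma> h0 r0"
      using ab prec_irrefl[OF d] unfolding above_def by auto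
    thus ?thesis using K0 True by simp
  next
    case False
    hence sh: "(s,h) \<in> rejs \<sigma>" using feasible_Rej.prems by auto
    show ?thesis
    proof (cases "h = h0 \<and> precedes (hpref K h) r0 s")
      case True
      hence "above K \<sigma> h0 r0 \<subseteq> above K (\<sigma> @ [Reject r0 h0]) h s"
        unfolding ab unfolding above_def using prec_trans[OF d] prec_irrefl[OF d] by auto
      thus ?thesis using K0 True card_mono[OF above_fin] by (metis le_trans)
    next
      case False
      hence "above K (\<sigma> @ [Reject r0 h0]) h s = above K \<sigma> h s"
        unfolding ab unfolding above_def by auto
      thus ?thesis using feasible_Rej.IH[OF sh] by simp
    qed
  qed
qed

lemma max_tent_above:
  assumes v: "valid_instance K" and hc: "hospital_complete K" and m: "maximal_feasible K \<sigma>"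
    and t: "(t,h) \<in> tents \<sigma>" and s: "(s,h) \<in> rejs \<sigma>"
  shows "precedes (hpref K h) t s"
proof (rule ccontr)
  assume np: "\<not> precedes (hpref K h) t s"
  have f: "feasible K \<sigma>" using m unfolding maximal_feasible_def by simp
  have d: "distinct (hpref K h)" using hpref_distinct[OF v] .
  have tp: "(t,h) \<in> props \<sigma>" "(t,h) \<notin> rejs \<sigma>" using t unfolding tents_def by auto
  have sp: "(s,h) \<in> props \<sigma>" using s feas_rejs_props[OF f] by auto
  have "t \<in> Res K" "s \<in> Res K" "h \<in> Hos K" using tp sp feas_props_RH[OF v f] by auto
  hence mem: "t \<in> set (hpref K h)" "s \<in> set (hpref K h)" using hc unfolding hospital_complete_def by auto
  have "t \<noteq> s" using tp s by auto
  hence st: "precedes (hpref K h) s t" using prec_total[OF mem] np by blast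
  have q: "quota K h \<le> card (above K \<sigma> h s)" using rej_inv[OF v hc f s] .
  have A1: "above K \<sigma> h s \<subseteq> set (hpref K h) \<inter> res_h h (props \<sigma>)"
    unfolding above_def res_h_def tents_def using prec_mem by fastforce
  have A2: "above K \<sigma> h s \<subseteq> {x \<in> res_h h (props \<sigma>). precedes (hpref K h) x t}"
    unfolding above_def res_h_def tents_def using prec_trans[OF d _ st] by fastforce
  have fin1: "finite (set (hpref K h) \<inter> res_h h (props \<sigma>))" by simp
  have fin2: "finite {x \<in> res_h h (props \<sigma>). precedes (hpref K h) x t}"
    by (rule finite_subset[of _ "set (hpref K h)"]) (use prec_mem in fast, simp)
  have "ousted K (props \<sigma>) t h" unfolding ousted_def
    using tp(1) q card_mono[OF fin1 A1] card_mono[OF fin2 A2] by auto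
  hence "feasible K (\<sigma> @ [Reject t h])" using feasible_Rej[OF f _ tp(2)] by blast
  thus False using m unfolding maximal_feasible_def by blast
qed

lemma max_rej_card:
  assumes v: "valid_instance K" and hc: "hospital_complete K" and m: "maximal_feasible K \<sigma>"
    and s: "(s,h) \<in> rejs \<sigma>"
  shows "quota K h \<le> card (res_h h (tents \<sigma>))"
proof -
  have f: "feasible K \<sigma>" using m unfolding maximal_feasible_def by simp
  have "res_h h (tents \<sigma>) \<subseteq> Res K" using feas_props_RH[OF v f] unfolding res_h_def tents_def by auto
  hence fin: "finite (res_h h (tents \<sigma>))" using v finite_subset unfolding valid_instance_def by blast
  have "above K \<sigma> h s \<subseteq> res_h h (tents \<sigma>)" unfolding above_def by auto
  thus ?thesis using rej_inv[OF v hc f s] card_mono[OF fin] by (meson le_trans)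
qed



definition extJ :: "('r,'h) inst \<Rightarrow> ('r \<times> 'h) set \<Rightarrow> ('r,'h) inst" where
  "extJ I P = I\<lparr>rpref := \<lambda>r. rpref I r @ (if r \<in> res P then [SOME h. (r,h) \<in> P] else [])\<rparr>"

locale presc =
  fixes I :: "('r,'h) inst" and P X :: "('r \<times> 'h) set"
  assumes v: "valid_instance I" and rm: "resident_minimal I" and hc: "hospital_complete I"
    and pr: "prescription I P X"
begin

abbreviation "J \<equiv> extJ I P"

lemma PRH: "P \<subseteq> Res I \<times> Hos I" and XRH: "X \<subseteq> Res I \<times> Hos I"
  and Pdisj: "P \<inter> propI I = {}"
  and Pfun: "(r,h) \<in> P \<Longrightarrow> (r,h') \<in> P \<Longrightarrow> h = h'"
  and XT: "X \<subseteq> tentI I"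
  and P4: "res P \<inter> res (tentI I) \<subseteq> res X"
  and P5: "h \<in> Hos I \<Longrightarrow> card (res_h h (P \<union> (tentI I - X))) \<le> quota I h"
  and P5e: "h \<in> Hos I \<Longrightarrow> res_h h X \<noteq> {} \<Longrightarrow> card (res_h h (P \<union> (tentI I - X))) = quota I h"
  and P6: "h \<in> Hos I \<Longrightarrow> a \<in> res_h h (P \<union> (tentI I - X)) \<Longrightarrow> b \<in> res_h h X \<Longrightarrow> precedes (hpref I h) a b"
  using pr unfolding prescription_def by blast+

lemma propI_eq: "propI I = {(r,h). h \<in> set (rpref I r)}"
  using rm unfolding resident_minimal_def .

lemma P_notin: "(r,h) \<in> P \<Longrightarrow> h \<notin> set (rpref I r)"
  using Pdisj propI_eq by blast

lemma some_P: "(r,h) \<in> P \<Longrightarrow> (SOME h. (r,h) \<in> P) = h"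
  using Pfun by (metis someI_ex)

lemma J_simps[simp]: "Res J = Res I" "Hos J = Hos I" "quota J = quota I" "hpref J = hpref I"
  "rpref J r = rpref I r @ (if r \<in> res P then [SOME h. (r,h) \<in> P] else [])"
  unfolding extJ_def by simp_all

lemma resP_Res: "r \<in> res P \<Longrightarrow> r \<in> Res I"
  using PRH unfolding res_def by auto

lemma J_mem: "h \<in> set (rpref J r) \<longleftrightarrow> h \<in> set (rpref I r) \<or> (r,h) \<in> P"
proof (cases "r \<in> res P")
  case True
  then obtain h0 where h0: "(r,h0) \<in> P" unfolding res_def by blast
  have "set (rpref J r) = set (rpref I r) \<union> {h0}" using True some_P[OF h0] by simp
  moreover have "(r,h) \<in> P \<longleftrightarrow> h = h0" using Pfun h0 by blast
  ultimately show ?thesis by blast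
next
  case False
  hence "(r,h) \<notin> P" unfolding res_def by blast
  thus ?thesis using False by simp
qed

lemma ousted_J: "ousted J = ousted I"
  unfolding ousted_def[abs_def] by simp

lemma valid_J: "valid_instance J"
proof -
  have "\<forall>r\<in>Res I. distinct (rpref J r) \<and> set (rpref J r) \<subseteq> Hos I"
  proof
    fix r assume r: "r \<in> Res I"
    have "distinct (rpref J r)"
    proof (cases "r \<in> res P")
      case True
      then obtain h where h: "(r,h) \<in> P" unfolding res_def by blast
      thus ?thesis using v r P_notin[OF h] some_P[OF h] True unfolding valid_instance_def by simp
    next
      case False thus ?thesis using v r unfolding valid_instance_def by simp
    qed
    moreover have "set (rpref J r) \<subseteq> Hos I" using J_mem v r PRH unfolding valid_instance_def by blast
    ultimately show "distinct (rpref J r) \<and> set (rpref J r) \<subseteq> Hos I" by simp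
  qed
  moreover have "\<forall>r. r \<notin> Res I \<longrightarrow> rpref J r = []"
    using v resP_Res unfolding valid_instance_def by auto
  ultimately show ?thesis using v unfolding valid_instance_def by simp
qed

lemma hc_J: "hospital_complete J"
  using hc unfolding hospital_complete_def by simp

lemma ext_J: "is_extension I J"
  unfolding is_extension_def using valid_J by auto

lemma maxI: "maximal_feasible I (some_max I)" using some_max[OF v] .
lemma maxJ: "maximal_feasible J (some_max J)" using some_max[OF valid_J] .


lemma distinct_rJ: "distinct (rpref J r)"
  using valid_J unfolding valid_instance_def by (cases "r \<in> Res I") auto

lemma prec_J: "h \<in> set (rpref I r) \<Longrightarrow> precedes (rpref J r) h' h \<Longrightarrow> precedes (rpref I r) h' h"
proof -
  assume h: "h \<in> set (rpref I r)" and p: "precedes (rpref J r) h' h"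
  have dd: "distinct (rpref I r @ (if r \<in> res P then [SOME h. (r,h) \<in> P] else []))"
    using distinct_rJ[of r] by simp
  show ?thesis using prec_append[OF dd h] p by simp
qed

lemma ousted_mono:
  assumes "ousted K M r h" "M \<subseteq> M'" shows "ousted K M' r h"
proof -
  have f1: "finite (set (hpref K h) \<inter> res_h h M')" by simp
  have f2: "finite {x \<in> res_h h M'. precedes (hpref K h) x r}"
    by (rule finite_subset[of _ "set (hpref K h)"]) (use prec_mem in fast, simp)
  have s1: "set (hpref K h) \<inter> res_h h M \<subseteq> set (hpref K h) \<inter> res_h h M'"
    and s2: "{x \<in> res_h h M. precedes (hpref K h) x r} \<subseteq> {x \<in> res_h h M'. precedes (hpref K h) x r}"
    using assms(2) unfolding res_h_def by auto
  show ?thesis using assms(1) assms(2) card_mono[OF f1 s1] card_mono[OF f2 s2] unfolding ousted_def by auto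
qed

lemma simulate:
  assumes m: "maximal_feasible J \<sigma>"
  shows "feasible I \<tau> \<Longrightarrow> props \<tau> \<subseteq> props \<sigma> \<and> rejs \<tau> \<subseteq> rejs \<sigma>"
proof (induction rule: feasible.induct)
  case feasible_Nil thus ?case by simp
next
  case (feasible_Prop \<tau> r h)
  have f: "feasible J \<sigma>" using m unfolding maximal_feasible_def by simp
  have d: "distinct (rpref J r)" using distinct_rJ .
  have hJ: "h \<in> set (rpref J r)" using feasible_Prop.hyps(4) J_mem by blast
  have "(r,h) \<in> props \<sigma>"
  proof (rule ccontr)
    assume np: "(r,h) \<notin> props \<sigma>"
    show False
    proof (cases "r \<in> res (tents \<sigma>)")
      case False
      have "\<forall>h'. precedes (rpref J r) h' h \<longrightarrow> (r, h') \<in> rejs \<sigma>"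
      proof (intro allI impI)
        fix h' assume "precedes (rpref J r) h' h"
        hence "precedes (rpref I r) h' h" using prec_J feasible_Prop.hyps(4) by blast
        thus "(r, h') \<in> rejs \<sigma>" using feasible_Prop.hyps(5) feasible_Prop.IH by blast
      qed
      hence "feasible J (\<sigma> @ [Propose r h])" using feasible.feasible_Prop[OF f False np hJ] by blast
      thus False using m unfolding maximal_feasible_def by blast
    next
      case True
      then obtain h'' where h'': "(r,h'') \<in> tents \<sigma>" unfolding res_def by blast
      hence h''p: "(r,h'') \<in> props \<sigma>" "(r,h'') \<notin> rejs \<sigma>" unfolding tents_def by auto
      have h''J: "h'' \<in> set (rpref J r)" using feas_props_pref[OF f h''p(1)] .
      have "h'' \<noteq> h" using h''p np by auto
      then consider "precedes (rpref J r) h h''" | "precedes (rpref J r) h'' h"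
        using prec_total[OF hJ h''J] by blast
      thus False
      proof cases
        case 1
        hence "(r,h) \<in> rejs \<sigma>" using feas_order[OF f h''p(1)] by blast
        thus False using feas_rejs_props[OF f] np by blast
      next
        case 2
        hence "precedes (rpref I r) h'' h" using prec_J feasible_Prop.hyps(4) by blast
        thus False using feasible_Prop.hyps(5) feasible_Prop.IH h''p(2) by blast
      qed
    qed
  qed
  thus ?case using feasible_Prop.IH by simp
next
  case (feasible_Rej \<tau> r h)
  have f: "feasible J \<sigma>" using m unfolding maximal_feasible_def by simp
  have o: "ousted J (props \<sigma>) r h" using ousted_mono[OF feasible_Rej.hyps(2)] feasible_Rej.IH ousted_J by simp
  have "(r,h) \<in> rejs \<sigma>"
  proof (rule ccontr)
    assume "(r,h) \<notin> rejs \<sigma>"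
    hence "feasible J (\<sigma> @ [Reject r h])" using feasible.feasible_Rej[OF f o] by blast
    thus False using m unfolding maximal_feasible_def by blast
  qed
  thus ?case using feasible_Rej.IH by simp
qed

end


context presc begin

lemma tentI_eq: "tentI I = propI I - rejI I"
  unfolding tentI_def propI_def rejI_def tents_def ..

lemma fI: "feasible I (some_max I)" using maxI unfolding maximal_feasible_def by simp

lemma propI_RH: "propI I \<subseteq> Res I \<times> Hos I"
  unfolding propI_def using feas_props_RH[OF v fI] .

lemma rejI_prop: "rejI I \<subseteq> propI I"
  unfolding propI_def rejI_def using feas_rejs_props[OF fI] .

lemma I1: "(t,h) \<in> tentI I \<Longrightarrow> (s,h) \<in> rejI I \<Longrightarrow> precedes (hpref I h) t s"
  unfolding tentI_def rejI_def using max_tent_above[OF v hc maxI] by blast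

lemma I2: "(s,h) \<in> rejI I \<Longrightarrow> quota I h \<le> card (res_h h (tentI I))"
  unfolding tentI_def rejI_def using max_rej_card[OF v hc maxI] by blast

lemma finA: "finite (res_h h (P \<union> (tentI I - X)))"
proof -
  have "res_h h (P \<union> (tentI I - X)) \<subseteq> Res I" using PRH propI_RH tentI_eq unfolding res_h_def by auto
  thus ?thesis using v finite_subset unfolding valid_instance_def by blast
qed

lemma dH: "distinct (hpref I h)" using hpref_distinct[OF v] .

lemma Xh_ne:
  assumes "(r,h) \<in> P" and s: "(s,h) \<in> rejI I"
  shows "res_h h X \<noteq> {}"
proof
  assume e: "res_h h X = {}"
  have h: "h \<in> Hos I" using assms(1) PRH by auto
  let ?A = "res_h h (P \<union> (tentI I - X))"
  have "res_h h (tentI I) \<subseteq> ?A" using e unfolding res_h_def by auto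
  moreover have "r \<in> ?A" "r \<notin> res_h h (tentI I)" using assms(1) Pdisj tentI_eq unfolding res_h_def by auto
  ultimately have "res_h h (tentI I) \<subset> ?A" by blast
  hence "card (res_h h (tentI I)) < card ?A" using psubset_card_mono[OF finA] by blast
  thus False using P5[OF h] I2[OF s] by linarith
qed

lemma not_ousted:
  assumes M: "M \<subseteq> propI I \<union> P" and rh: "(r,h) \<in> M" and nr: "(r,h) \<notin> rejI I" and nx: "(r,h) \<notin> X"
  shows "\<not> ousted I M r h"
proof
  assume o: "ousted I M r h"
  have h: "h \<in> Hos I" and r: "r \<in> Res I" using M rh PRH propI_RH by auto
  hence rmem: "r \<in> set (hpref I h)" using hc unfolding hospital_complete_def by auto
  let ?A = "res_h h (P \<union> (tentI I - X))"
  have rA: "r \<in> ?A" using M rh nr nx tentI_eq unfolding res_h_def by auto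
  have sub: "{x \<in> res_h h M. precedes (hpref I h) x r} \<subseteq> ?A - {r}"
  proof
    fix x assume "x \<in> {x \<in> res_h h M. precedes (hpref I h) x r}"
    hence xM: "(x,h) \<in> M" and xr: "precedes (hpref I h) x r" unfolding res_h_def by auto
    have xnr: "x \<noteq> r" using xr prec_irrefl[OF dH] by blast
    have notrej: "(x,h) \<notin> rejI I"
    proof
      assume xrej: "(x,h) \<in> rejI I"
      have "precedes (hpref I h) r x"
      proof (cases "(r,h) \<in> P")
        case True
        have "res_h h X \<noteq> {}" using Xh_ne[OF True xrej] .
        then obtain y where y: "(y,h) \<in> X" unfolding res_h_def by blast
        have "y \<in> res_h h X" using y unfolding res_h_def by simp
        hence "precedes (hpref I h) r y" using P6[OF h rA] by blast
        moreover have "precedes (hpref I h) y x" using I1[OF _ xrej] y XT by blast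
        ultimately show ?thesis using prec_trans[OF dH] by blast
      next
        case False
        hence "(r,h) \<in> tentI I" using M rh nr tentI_eq by auto
        thus ?thesis using I1[OF _ xrej] by blast
      qed
      thus False using prec_asym[OF dH] xr by blast
    qed
    show "x \<in> ?A - {r}"
    proof (cases "(x,h) \<in> P")
      case True thus ?thesis using xnr unfolding res_h_def by auto
    next
      case False
      hence xT: "(x,h) \<in> tentI I" using M xM notrej tentI_eq by auto
      have "(x,h) \<notin> X"
      proof
        assume "(x,h) \<in> X"
        hence "x \<in> res_h h X" unfolding res_h_def by simp
        hence "precedes (hpref I h) r x" using P6[OF h rA] by blast
        thus False using prec_asym[OF dH] xr by blast
      qed
      thus ?thesis using xT xnr unfolding res_h_def by auto
    qed
  qed
  have "card {x \<in> res_h h M. precedes (hpref I h) x r} \<le> card (?A - {r})"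
    using card_mono[OF _ sub] finA by blast
  also have "\<dots> < card ?A" using rA finA[of h] by (meson card_Diff1_less)
  also have "\<dots> \<le> quota I h" using P5[OF h] .
  finally show False using o rmem unfolding ousted_def by auto
qed

lemma safety: "feasible J \<sigma> \<Longrightarrow> props \<sigma> \<subseteq> propI I \<union> P \<and> rejs \<sigma> \<subseteq> rejI I \<union> X"
proof (induction rule: feasible.induct)
  case feasible_Nil thus ?case by simp
next
  case (feasible_Prop \<sigma> r h)
  have "(r,h) \<in> propI I \<union> P" using feasible_Prop.hyps(4) J_mem propI_eq by blast
  thus ?case using feasible_Prop.IH by simp
next
  case (feasible_Rej \<sigma> r h)
  have o: "ousted I (props \<sigma>) r h" using feasible_Rej.hyps(2) ousted_J by simp
  have rh: "(r,h) \<in> props \<sigma>" using o unfolding ousted_def by simp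
  have "(r,h) \<in> rejI I \<union> X" using not_ousted[OF _ rh] feasible_Rej.IH o by blast
  thus ?case using feasible_Rej.IH by simp
qed

end


lemma lowest:
  assumes d: "distinct L"
  shows "finite A \<Longrightarrow> A \<noteq> {} \<Longrightarrow> A \<subseteq> set L \<Longrightarrow> \<exists>x\<in>A. \<forall>y\<in>A. y \<noteq> x \<longrightarrow> precedes L y x"
proof (induction rule: finite_ne_induct)
  case (singleton x) thus ?case by simp
next
  case (insert a F)
  then obtain x where x: "x \<in> F" "\<forall>y\<in>F. y \<noteq> x \<longrightarrow> precedes L y x" by auto
  have ax: "a \<noteq> x" using x insert.hyps by auto
  have mem: "a \<in> set L" "x \<in> set L" using insert.prems x by auto
  show ?case
  proof (cases "precedes L x a")
    case True
    have "\<forall>y\<in>insert a F. y \<noteq> a \<longrightarrow> precedes L y a"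
    proof (intro ballI impI)
      fix y assume "y \<in> insert a F" "y \<noteq> a"
      hence yF: "y \<in> F" by simp
      show "precedes L y a"
      proof (cases "y = x")
        case yx: True thus ?thesis using True by simp
      next
        case False thus ?thesis using x(2) yF True prec_trans[OF d] by blast
      qed
    qed
    thus ?thesis by blast
  next
    case False
    hence "precedes L a x" using prec_total[OF mem] ax by blast
    thus ?thesis using x by blast
  qed
qed

lemma card_rel_sum:
  assumes fH: "finite H" and B: "B \<subseteq> A \<times> H" and fB: "finite B"
  shows "card B = (\<Sum>h\<in>H. card (res_h h B))"
proof -
  have eq: "B = (\<Union>h\<in>H. (\<lambda>x. (x,h)) ` res_h h B)" using B unfolding res_h_def by auto
  have fin: "\<forall>h\<in>H. finite ((\<lambda>x. (x,h)) ` res_h h B)"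
  proof
    fix h have "(\<lambda>x. (x,h)) ` res_h h B \<subseteq> B" unfolding res_h_def by auto
    thus "finite ((\<lambda>x. (x,h)) ` res_h h B)" using fB finite_subset by blast
  qed
  have dis: "\<forall>i\<in>H. \<forall>j\<in>H. i \<noteq> j \<longrightarrow> (\<lambda>x. (x,i)) ` res_h i B \<inter> (\<lambda>x. (x,j)) ` res_h j B = {}" by auto
  have "card B = (\<Sum>h\<in>H. card ((\<lambda>x. (x,h)) ` res_h h B))"
    by (subst eq, rule card_UN_disjoint[OF fH fin dis])
  also have "\<dots> = (\<Sum>h\<in>H. card (res_h h B))"
    by (rule sum.cong) (auto intro: card_image inj_onI)
  finally show ?thesis .
qed

context presc begin

abbreviation "\<sigma>J \<equiv> some_max J"

lemma fJ: "feasible J \<sigma>J" using maxJ unfolding maximal_feasible_def by simp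

lemma sim: "propI I \<subseteq> props \<sigma>J" "rejI I \<subseteq> rejs \<sigma>J"
  using simulate[OF maxJ fI] unfolding propI_def rejI_def by auto

lemma saf: "props \<sigma>J \<subseteq> propI I \<union> P" "rejs \<sigma>J \<subseteq> rejI I \<union> X"
  using safety[OF fJ] by auto

lemma finRes: "M \<subseteq> Res I \<times> Hos I \<Longrightarrow> finite M"
  using v unfolding valid_instance_def by (meson finite_SigmaI finite_subset)

lemma finresh: "M \<subseteq> Res I \<times> Hos I \<Longrightarrow> finite (res_h h M)"
proof -
  assume "M \<subseteq> Res I \<times> Hos I"
  hence "res_h h M \<subseteq> Res I" unfolding res_h_def by auto
  thus ?thesis using v finite_subset unfolding valid_instance_def by blast
qed

lemma PrRH: "props \<sigma>J \<subseteq> Res I \<times> Hos I" using feas_props_RH[OF valid_J fJ] by simp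

lemma TI_sub: "tentI I \<subseteq> props \<sigma>J" using sim tentI_eq by blast

lemma claimA:
  assumes ph: "(p,h) \<in> P" "(p,h) \<notin> props \<sigma>J"
  shows "\<exists>h'. (p,h') \<in> X \<and> (p,h') \<notin> rejs \<sigma>J"
proof -
  have p: "p \<in> Res I" using ph PRH by auto
  have hJ: "h \<in> set (rpref J p)" using J_mem ph by blast
  have "p \<in> res (tents \<sigma>J)"
  proof (rule ccontr)
    assume np: "p \<notin> res (tents \<sigma>J)"
    have "\<forall>h'. precedes (rpref J p) h' h \<longrightarrow> (p, h') \<in> rejs \<sigma>J"
    proof (intro allI impI)
      fix h' assume pr': "precedes (rpref J p) h' h"
      have "h' \<in> set (rpref J p)" "h' \<noteq> h" using prec_mem[OF pr'] prec_irrefl[OF distinct_rJ] pr' by auto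
      hence "(p,h') \<notin> P" using Pfun ph by blast
      hence "(p,h') \<in> propI I" using J_mem propI_eq \<open>h' \<in> set (rpref J p)\<close> by blast
      hence "(p,h') \<in> props \<sigma>J" using sim by blast
      thus "(p,h') \<in> rejs \<sigma>J" using np unfolding res_def tents_def by blast
    qed
    hence "feasible J (\<sigma>J @ [Propose p h])" using feasible.feasible_Prop[OF fJ np ph(2) hJ] by blast
    thus False using maxJ unfolding maximal_feasible_def by blast
  qed
  then obtain h' where h': "(p,h') \<in> tents \<sigma>J" unfolding res_def by blast
  hence h'p: "(p,h') \<in> props \<sigma>J" "(p,h') \<notin> rejs \<sigma>J" unfolding tents_def by auto
  have "h' \<noteq> h" using h'p ph by auto
  hence "(p,h') \<notin> P" using Pfun ph by blast
  hence "(p,h') \<in> propI I" using h'p saf by blast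
  moreover have "(p,h') \<notin> rejI I" using h'p sim by blast
  ultimately have pT: "(p,h') \<in> tentI I" using tentI_eq by blast
  have "p \<in> res X" using P4 pT ph unfolding res_def by blast
  then obtain h'' where h'': "(p,h'') \<in> X" unfolding res_def by blast
  have "h'' = h'" using feas_tent_fun[OF fI] XT h'' pT unfolding tentI_def by blast
  thus ?thesis using h'' h'p by blast
qed

lemma claimB:
  assumes h: "h \<in> Hos I"
  shows "card (res_h h (X - rejs \<sigma>J)) \<le> card (res_h h (P - props \<sigma>J))"
proof (cases "res_h h (X - rejs \<sigma>J) = {}")
  case True thus ?thesis by simp
next
  case False
  let ?S = "res_h h (X - rejs \<sigma>J)" and ?U = "res_h h (P - props \<sigma>J)"
  let ?A = "res_h h (P \<union> (tentI I - X))" and ?Pr = "props \<sigma>J"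
  have XRH': "X - rejs \<sigma>J \<subseteq> Res I \<times> Hos I" using XRH by blast
  have TRH: "tentI I - X \<subseteq> Res I \<times> Hos I" using propI_RH tentI_eq by blast
  have fS: "finite ?S" using finresh[OF XRH'] .
  have SRes: "?S \<subseteq> set (hpref I h)" using XRH hc h unfolding hospital_complete_def res_h_def by auto
  obtain x where x: "x \<in> ?S" and low: "\<forall>y\<in>?S. y \<noteq> x \<longrightarrow> precedes (hpref I h) y x"
    using lowest[OF dH fS False SRes] by blast
  have xX: "(x,h) \<in> X" "(x,h) \<notin> rejs \<sigma>J" using x unfolding res_h_def by auto
  have xPr: "(x,h) \<in> ?Pr" using xX XT TI_sub by blast
  have qA: "card ?A = quota I h" using P5e[OF h] xX unfolding res_h_def by blast
  have xmem: "x \<in> set (hpref I h)" using SRes x by blast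
  have no: "\<not> ousted I ?Pr x h"
  proof
    assume "ousted I ?Pr x h"
    hence "feasible J (\<sigma>J @ [Reject x h])" using feasible.feasible_Rej[OF fJ _ xX(2)] ousted_J by simp
    thus False using maxJ unfolding maximal_feasible_def by blast
  qed
  let ?Q = "{y \<in> res_h h ?Pr. precedes (hpref I h) y x}"
  have fQ: "finite ?Q" using finresh[OF PrRH] by simp
  have "?Q \<subseteq> set (hpref I h) \<inter> res_h h ?Pr" using prec_mem by fast
  hence "card ?Q \<le> card (set (hpref I h) \<inter> res_h h ?Pr)" using card_mono by blast
  hence Qlt: "card ?Q < quota I h" using no xPr xmem unfolding ousted_def by auto
  let ?D1 = "res_h h (tentI I - X)" and ?D2 = "res_h h P - ?U" and ?D3 = "?S - {x}"
  have fD1: "finite ?D1" using finresh[OF TRH] .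
  have fP: "finite (res_h h P)" using finresh[OF PRH] .
  have fD2: "finite ?D2" using fP by simp
  have fD3: "finite ?D3" using fS by simp
  have DQ: "?D1 \<union> ?D2 \<union> ?D3 \<subseteq> ?Q"
  proof
    fix y assume y: "y \<in> ?D1 \<union> ?D2 \<union> ?D3"
    have xXh: "x \<in> res_h h X" using xX unfolding res_h_def by simp
    show "y \<in> ?Q"
    proof (cases "y \<in> ?D3")
      case True thus ?thesis using low xX XT TI_sub unfolding res_h_def by blast
    next
      case False
      hence "y \<in> ?D1 \<or> y \<in> ?D2" using y by blast
      hence "y \<in> ?A" and "(y,h) \<in> ?Pr" using TI_sub unfolding res_h_def by auto
      thus ?thesis using P6[OF h _ xXh] unfolding res_h_def by auto
    qed
  qed
  have d12: "?D1 \<inter> ?D2 = {}" using Pdisj tentI_eq unfolding res_h_def by auto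
  have d3: "(?D1 \<union> ?D2) \<inter> ?D3 = {}" using Pdisj tentI_eq XT unfolding res_h_def by auto
  have cD: "card (?D1 \<union> ?D2 \<union> ?D3) = card ?D1 + card ?D2 + card ?D3"
    using card_Un_disjoint[OF fD1 fD2 d12] card_Un_disjoint[OF _ fD3 d3] fD1 fD2 by simp
  have "card (?D1 \<union> ?D2 \<union> ?D3) \<le> card ?Q" using card_mono[OF fQ DQ] .
  have Aeq: "?A = res_h h P \<union> ?D1" unfolding res_h_def by auto
  have "res_h h P \<inter> ?D1 = {}" using Pdisj tentI_eq unfolding res_h_def by auto
  hence cA: "card ?A = card (res_h h P) + card ?D1" using Aeq card_Un_disjoint[OF fP fD1] by simp
  have UP: "?U \<subseteq> res_h h P" unfolding res_h_def by auto
  have cD2: "card ?D2 = card (res_h h P) - card ?U" using card_Diff_subset[OF finite_subset[OF UP fP] UP] .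
  have cUP: "card ?U \<le> card (res_h h P)" using card_mono[OF fP UP] .
  have cD3: "card ?D3 = card ?S - 1" using x by simp
  have "card ?S \<ge> 1" using fS x by (metis One_nat_def Suc_leI card_gt_0_iff empty_iff)
  show ?thesis using cD \<open>card (?D1 \<union> ?D2 \<union> ?D3) \<le> card ?Q\<close> Qlt qA cA cD2 cUP cD3 \<open>card ?S \<ge> 1\<close>
    by linarith
qed

lemma stuck_all_resP: "X - rejs \<sigma>J \<subseteq> {(x,h). x \<in> res P}"
proof -
  let ?S = "X - rejs \<sigma>J" and ?U = "P - props \<sigma>J"
  let ?S2 = "{(x,h) \<in> ?S. x \<in> res P}"
  have fH: "finite (Hos I)" using v unfolding valid_instance_def by simp
  have SRH: "?S \<subseteq> Res I \<times> Hos I" using XRH by blast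
  have URH: "?U \<subseteq> Res I \<times> Hos I" using PRH by blast
  have fS: "finite ?S" using finRes[OF SRH] .
  have fU: "finite ?U" using finRes[OF URH] .
  have "card ?S = (\<Sum>h\<in>Hos I. card (res_h h ?S))" using card_rel_sum[OF fH SRH fS] .
  also have "\<dots> \<le> (\<Sum>h\<in>Hos I. card (res_h h ?U))" by (rule sum_mono) (rule claimB)
  also have "\<dots> = card ?U" using card_rel_sum[OF fH URH fU] by simp
  also have "\<dots> = card (fst ` ?U)"
  proof -
    have "inj_on fst ?U" using Pfun by (auto intro!: inj_onI)
    thus ?thesis by (simp add: card_image)
  qed
  also have "\<dots> \<le> card (fst ` ?S2)"
  proof (rule card_mono)
    have fS2: "finite ?S2" by (rule finite_subset[OF _ fS]) blast
    show "finite (fst ` ?S2)" using fS2 by simp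
    show "fst ` ?U \<subseteq> fst ` ?S2"
    proof
      fix p assume "p \<in> fst ` ?U"
      then obtain h where ph: "(p,h) \<in> P" "(p,h) \<notin> props \<sigma>J" by auto
      obtain h' where "(p,h') \<in> X" "(p,h') \<notin> rejs \<sigma>J" using claimA[OF ph] by blast
      moreover have "p \<in> res P" using ph unfolding res_def by blast
      ultimately have "(p,h') \<in> ?S2" by simp
      thus "p \<in> fst ` ?S2" by force
    qed
  qed
  also have "\<dots> \<le> card ?S2" by (rule card_image_le, rule finite_subset[OF _ fS]) blast
  finally have "card ?S \<le> card ?S2" .
  moreover have "?S2 \<subseteq> ?S" by blast
  ultimately have "?S2 = ?S" using card_seteq[OF fS] by blast
  thus ?thesis by blast
qed

end


theorem lemma1:
  fixes I :: "('r, 'h) inst" and P X :: "('r \<times> 'h) set"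
  assumes "valid_instance I"
    and "resident_minimal I"
    and "hospital_complete I"
    and "prescription I P X"
  shows "\<exists>J. simple_extension I J \<and>
             propI J - propI I \<subseteq> P \<and>
             rejI J - rejI I \<subseteq> X \<and>
             tgs P X \<subseteq> rejI J"
proof -
  interpret presc I P X using assms by unfold_locales
  have pJ: "propI J - propI I \<subseteq> P" using saf(1) unfolding propI_def by blast
  have rJ: "rejI J - rejI I \<subseteq> X" using saf(2) unfolding rejI_def by blast
  have XP: "X \<inter> P = {}" using XT tentI_eq Pdisj by blast
  have sJ: "simple_extension I J" unfolding simple_extension_def using ext_J pJ rJ XP by blast
  have tJ: "tgs P X \<subseteq> rejI J"
  proof
    fix rh assume a: "rh \<in> tgs P X"
    obtain r h where rh: "rh = (r,h)" by (cases rh)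
    have "(r,h) \<in> X" "r \<notin> res P" using a rh unfolding tgs_def by auto
    hence "(r,h) \<in> rejs \<sigma>J" using stuck_all_resP by blast
    thus "rh \<in> rejI J" using rh unfolding rejI_def by simp
  qed
  show ?thesis using sJ pJ rJ tJ by blast
qed

end
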